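(* Let $\mathcal{STAB}$ be the set of channels $\rho\mapsto U\rho U^\dagger$ with $U$ in the $n$-qubit Clifford group, let $\Phi_T$ be the channel $\rho\mapsto T_1\rho T_1^\dagger$ where $T_1$ is $T=\mathrm{diag}(1,e^{i\pi/4})$ acting on the first qubit, and let $\mathcal{STAB}^{(k)}_T$ be the set of all finite compositions of elements of $\mathcal{STAB}\cup\{\Phi_T\}$ in which $\Phi_T$ appears at most $k$ times. Then the free robustness of $\Phi_T$ with respect to $\mathcal{STAB}$ satisfies $\gamma(\Phi_T)\le\sqrt2/2$, and for every sample $S=(z_1,\ldots,z_m)$, \[ \hat{R}_S(\mathcal{F}(\mathcal{STAB}\cup\{\Phi_T\}))\le\Big(1+\tfrac{\sqrt2}{2}\Big)\hat{R}_S(\mathcal{F}(\mathcal{STAB})),\qquad \hat{R}_S(\mathcal{F}(\mathcal{STAB}^{(k)}_T))\le(1+\sqrt2)^k\,\hat{R}_S(\mathcal{F}(\mathcal{STAB})). \] In particular $\hat{R}_S(\mathcal{F}(\mathcal{STAB}^{(k)}_T))\le C\,(1+\sqrt2)^k\frac{n}{\sqrt m}\max_{\Phi\in\mathcal{STAB}}\|\vec f_\Phi\|_\infty$ for an absolute constant $C$.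
   Context: For a channel $\Phi$ on $n$ qubits, $f_\Phi(x,y)=\mathrm{Tr}[\Phi(|x\rangle\langle x|)\,|y\rangle\langle y|]$ for $x,y\in\mathbb{F}_2^n$; $\mathcal{F}(\Omega)=\{f_\Phi:\Phi\in\Omega\}$; $\vec f_\Phi=(f_\Phi(z_1),\ldots,f_\Phi(z_m))$. Empirical Rademacher complexity: $\hat{R}_S(\mathcal{G})=\mathbb{E}_{\epsilon}[\sup_{g\in\mathcal{G}}\frac1m\sum_i\epsilon_i g(z_i)]$, $\epsilon_i$ i.i.d. uniform on $\{\pm1\}$. Free robustness w.r.t. a set $\mathcal{O}$ of channels: $\gamma(\Psi)=\inf\{\lambda\ge0:\exists\,\Phi\in\mathrm{Conv}(\mathcal{O}),\ (\Psi+\lambda\Phi)/(1+\lambda)\in\mathrm{Conv}(\mathcal{O})\}$. *)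

theory Defs
  imports Complex_Main "HOL-Library.FuncSet"
begin

text \<open>A bitstring x in F_2^n is identified with the natural number
  x < 2^n whose bit j (j = 0..n-1) is the (j+1)-th coordinate of x; in particular the
  first qubit corresponds to bit 0. Operators on n qubits are 2^n x 2^n complex
  matrices, represented as functions nat => nat => complex (entries outside the range
  are irrelevant / produced as 0).\<close>

type_synonym cmat = "nat \<Rightarrow> nat \<Rightarrow> complex"
type_synonym chan = "cmat \<Rightarrow> cmat"

definition mmult :: "nat \<Rightarrow> cmat \<Rightarrow> cmat \<Rightarrow> cmat" where
  "mmult N A B = (\<lambda>i j. if i < N \<and> j < N then (\<Sum>k<N. A i k * B k j) else 0)"

definition adjoint :: "cmat \<Rightarrow> cmat" where
  "adjoint A = (\<lambda>i j. cnj (A j i))"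

definition idm :: "nat \<Rightarrow> cmat" where
  "idm N = (\<lambda>i j. if i < N \<and> j < N \<and> i = j then 1 else 0)"

definition unitary_mat :: "nat \<Rightarrow> cmat \<Rightarrow> bool" where
  "unitary_mat N U \<longleftrightarrow> mmult N U (adjoint U) = idm N \<and> mmult N (adjoint U) U = idm N"

text \<open>Pauli operator i^c X^a Z^b on n qubits: entry (x,y) is
  i^c [x = y xor a] (-1)^(b.y).\<close>
definition pauli :: "nat \<Rightarrow> nat \<Rightarrow> nat \<Rightarrow> nat \<Rightarrow> cmat" where
  "pauli n c a b = (\<lambda>x y. if x < 2^n \<and> y < 2^n \<and> x = Bit_Operations.xor y a
      then \<i> ^ c * (-1) ^ card {j. j < n \<and> bit b j \<and> bit y j} else 0)"

definition pauli_group :: "nat \<Rightarrow> cmat set" where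
  "pauli_group n = {pauli n c a b | c a b. c < 4 \<and> a < 2^n \<and> b < 2^n}"

definition clifford :: "nat \<Rightarrow> cmat set" where
  "clifford n = {U. unitary_mat (2^n) U \<and>
      (\<forall>P\<in>pauli_group n. mmult (2^n) (mmult (2^n) U P) (adjoint U) \<in> pauli_group n)}"

definition unitary_channel :: "nat \<Rightarrow> cmat \<Rightarrow> chan" where
  "unitary_channel N U = (\<lambda>\<rho>. mmult N (mmult N U \<rho>) (adjoint U))"

definition STAB :: "nat \<Rightarrow> chan set" where
  "STAB n = unitary_channel (2^n) ` clifford n"

definition T_gate :: "nat \<Rightarrow> cmat" where
  "T_gate n = (\<lambda>i j. if i < 2^n \<and> j < 2^n \<and> i = j
      then (if bit i 0 then exp (\<i> * complex_of_real (pi / 4)) else 1) else 0)"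

definition Phi_T :: "nat \<Rightarrow> chan" where
  "Phi_T n = unitary_channel (2^n) (T_gate n)"

definition comp_chans :: "chan list \<Rightarrow> chan" where
  "comp_chans ls = foldr (\<circ>) ls id"

definition STAB_T :: "nat \<Rightarrow> nat \<Rightarrow> chan set" where
  "STAB_T n k = {comp_chans ls | ls. set ls \<subseteq> STAB n \<union> {Phi_T n}
      \<and> length (filter (\<lambda>\<Phi>. \<Phi> = Phi_T n) ls) \<le> k}"

definition conv_chans :: "chan set \<Rightarrow> chan set" where
  "conv_chans Os = {\<Phi>. \<exists>(l::nat) (c::nat \<Rightarrow> real) \<Psi>. (\<forall>i<l. c i \<ge> 0 \<and> \<Psi> i \<in> Os) \<and>
      (\<Sum>i<l. c i) = 1 \<and>
      \<Phi> = (\<lambda>\<rho> x y. \<Sum>i<l. complex_of_real (c i) * \<Psi> i \<rho> x y)}"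

definition free_robustness :: "chan set \<Rightarrow> chan \<Rightarrow> real" where
  "free_robustness Os \<Psi> = Inf {lam. lam \<ge> 0 \<and> (\<exists>\<Phi>\<in>conv_chans Os.
      (\<lambda>\<rho> x y. (\<Psi> \<rho> x y + complex_of_real lam * \<Phi> \<rho> x y) / complex_of_real (1 + lam))
        \<in> conv_chans Os)}"

definition ket_bra :: "nat \<Rightarrow> cmat" where
  "ket_bra x = (\<lambda>i j. if i = x \<and> j = x then 1 else 0)"

definition mtrace :: "nat \<Rightarrow> cmat \<Rightarrow> complex" where
  "mtrace N A = (\<Sum>i<N. A i i)"

text \<open>f_Phi(x,y) = Tr[Phi(|x><x|) |y><y|] (real part; it is real for channels).\<close>
definition f_chan :: "nat \<Rightarrow> chan \<Rightarrow> nat \<times> nat \<Rightarrow> real" where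
  "f_chan n \<Phi> = (\<lambda>(x, y). Re (mtrace (2^n) (mmult (2^n) (\<Phi> (ket_bra x)) (ket_bra y))))"

definition F_class :: "nat \<Rightarrow> chan set \<Rightarrow> (nat \<times> nat \<Rightarrow> real) set" where
  "F_class n \<Omega> = f_chan n ` \<Omega>"

text \<open>Empirical Rademacher complexity of G on the sample z 0, ..., z (m-1);
  the expectation over uniform signs is the average over all sign vectors.\<close>
definition rademacher :: "nat \<Rightarrow> (nat \<Rightarrow> nat \<times> nat) \<Rightarrow> (nat \<times> nat \<Rightarrow> real) set \<Rightarrow> real" where
  "rademacher m z G = (\<Sum>\<epsilon>\<in>PiE {..<m} (\<lambda>_. {-1, 1::real}).
      (SUP g\<in>G. (\<Sum>i<m. \<epsilon> i * g (z i)) / real m)) / 2 ^ m"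

definition valid_sample :: "nat \<Rightarrow> nat \<Rightarrow> (nat \<Rightarrow> nat \<times> nat) \<Rightarrow> bool" where
  "valid_sample n m z \<longleftrightarrow> (\<forall>i<m. fst (z i) < 2^n \<and> snd (z i) < 2^n)"

definition sup_norm_vec :: "nat \<Rightarrow> (nat \<Rightarrow> nat \<times> nat) \<Rightarrow> (nat \<times> nat \<Rightarrow> real) \<Rightarrow> real" where
  "sup_norm_vec m z g = Max ((\<lambda>i. \<bar>g (z i)\<bar>) ` {..<m})"

end

theory Submission
  imports Defs "HOL-Probability.Hoeffding"
begin

lemma mmult_assoc: "mmult N (mmult N A B) C = mmult N A (mmult N B C)"
proof -
  have "(\<Sum>k<N. (\<Sum>l<N. A i l * B l k) * C k j) = (\<Sum>l<N. A i l * (\<Sum>k<N. B l k * C k j))" for i j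
  proof -
    have "(\<Sum>k<N. (\<Sum>l<N. A i l * B l k) * C k j) = (\<Sum>k<N. \<Sum>l<N. A i l * B l k * C k j)"
      by (simp add: sum_distrib_right)
    also have "\<dots> = (\<Sum>l<N. \<Sum>k<N. A i l * B l k * C k j)" by (rule sum.swap)
    also have "\<dots> = (\<Sum>l<N. A i l * (\<Sum>k<N. B l k * C k j))"
      by (simp add: sum_distrib_left mult.assoc)
    finally show ?thesis .
  qed
  then show ?thesis unfolding mmult_def by (auto simp: fun_eq_iff)
qed

lemma adjoint_mmult: "Defs.adjoint (mmult N A B) = mmult N (Defs.adjoint B) (Defs.adjoint A)"
  unfolding Defs.adjoint_def mmult_def by (auto simp: fun_eq_iff mult.commute)

lemma mmult_idm_left: "mmult N (idm N) A = (\<lambda>i j. if i < N \<and> j < N then A i j else 0)"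
proof -
  have "(\<Sum>k<N. (if i < N \<and> k < N \<and> i = k then 1 else 0) * A k j) = A i j" if "i < N" for i j
  proof -
    have "(\<Sum>k<N. (if i < N \<and> k < N \<and> i = k then 1 else 0) * A k j) = (\<Sum>k<N. if i = k then A k j else 0)"
      by (rule sum.cong) auto
    then show ?thesis using that by simp
  qed
  then show ?thesis unfolding mmult_def idm_def by (auto simp: fun_eq_iff)
qed

lemma mmult_idm_right: "mmult N A (idm N) = (\<lambda>i j. if i < N \<and> j < N then A i j else 0)"
proof -
  have "(\<Sum>k<N. A i k * (if k < N \<and> j < N \<and> k = j then 1 else 0)) = A i j" if "j < N" for i j
  proof -
    have "(\<Sum>k<N. A i k * (if k < N \<and> j < N \<and> k = j then 1 else 0)) = (\<Sum>k<N. if k = j then A i k else 0)"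
      by (rule sum.cong) auto
    then show ?thesis using that by simp
  qed
  then show ?thesis unfolding mmult_def idm_def by (auto simp: fun_eq_iff)
qed

lemma mmult_cong_range:
  assumes "\<And>i j. i < N \<Longrightarrow> j < N \<Longrightarrow> A i j = A' i j"
      and "\<And>i j. i < N \<Longrightarrow> j < N \<Longrightarrow> B i j = B' i j"
  shows "mmult N A B = mmult N A' B'"
  unfolding mmult_def using assms by (auto simp: fun_eq_iff intro!: sum.cong)

lemma mmult_trunc_left: "mmult N (\<lambda>i j. if i < N \<and> j < N then A i j else 0) B = mmult N A B"
  by (rule mmult_cong_range) auto
lemma mmult_trunc_right: "mmult N A (\<lambda>i j. if i < N \<and> j < N then B i j else 0) = mmult N A B"
  by (rule mmult_cong_range) auto

definition diagm :: "nat \<Rightarrow> (nat \<Rightarrow> complex) \<Rightarrow> cmat" where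
  "diagm N d = (\<lambda>i j. if i < N \<and> j < N \<and> i = j then d i else 0)"

lemma mmult_diag_left: "mmult N (diagm N d) A = (\<lambda>i j. if i < N \<and> j < N then d i * A i j else 0)"
proof -
  have "(\<Sum>k<N. (if i < N \<and> k < N \<and> i = k then d i else 0) * A k j) = d i * A i j" if "i < N" for i j
  proof -
    have "(\<Sum>k<N. (if i < N \<and> k < N \<and> i = k then d i else 0) * A k j) = (\<Sum>k<N. if i = k then d i * A k j else 0)"
      by (rule sum.cong) auto
    then show ?thesis using that by simp
  qed
  then show ?thesis unfolding mmult_def diagm_def by (auto simp: fun_eq_iff)
qed

lemma mmult_diag_right: "mmult N A (diagm N d) = (\<lambda>i j. if i < N \<and> j < N then A i j * d j else 0)"
proof -
  have "(\<Sum>k<N. A i k * (if k < N \<and> j < N \<and> k = j then d k else 0)) = A i j * d j" if "j < N" for i j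
  proof -
    have "(\<Sum>k<N. A i k * (if k < N \<and> j < N \<and> k = j then d k else 0)) = (\<Sum>k<N. if k = j then A i k * d k else 0)"
      by (rule sum.cong) auto
    then show ?thesis using that by simp
  qed
  then show ?thesis unfolding mmult_def diagm_def by (auto simp: fun_eq_iff)
qed

lemma adjoint_diag: "Defs.adjoint (diagm N d) = diagm N (\<lambda>i. cnj (d i))"
  unfolding Defs.adjoint_def diagm_def by (auto simp: fun_eq_iff)

lemma idm_diag: "idm N = diagm N (\<lambda>_. 1)"
  unfolding idm_def diagm_def by simp

lemma uc_diag: "unitary_channel N (diagm N d) \<rho> =
   (\<lambda>x y. if x < N \<and> y < N then d x * \<rho> x y * cnj (d y) else 0)"
  unfolding unitary_channel_def adjoint_diag mmult_diag_left mmult_diag_right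
  by (auto simp: fun_eq_iff)

lemma conj_diag: "mmult N (mmult N (diagm N d) A) (Defs.adjoint (diagm N d)) =
   (\<lambda>x y. if x < N \<and> y < N then d x * A x y * cnj (d y) else 0)"
  using uc_diag[of N d A] unfolding unitary_channel_def .

lemma unitary_diag: assumes "\<And>i. i < N \<Longrightarrow> d i * cnj (d i) = 1"
  shows "unitary_mat N (diagm N d)"
  unfolding unitary_mat_def adjoint_diag mmult_diag_left idm_def
  using assms by (auto simp: fun_eq_iff diagm_def mult.commute)

lemma uc_comp: "unitary_channel N U (unitary_channel N V \<rho>) = unitary_channel N (mmult N U V) \<rho>"
  unfolding unitary_channel_def adjoint_mmult by (simp add: mmult_assoc)

lemma idm_absorb_right: "mmult N A (mmult N (idm N) X) = mmult N A X"
  unfolding mmult_idm_left mmult_trunc_right ..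

lemma idm_absorb_left: "mmult N (mmult N X (idm N)) A = mmult N X A"
  unfolding mmult_idm_right mmult_trunc_left ..

lemma unitary_cancel1: "unitary_mat N V \<Longrightarrow> mmult N V (mmult N (Defs.adjoint V) X) = mmult N (idm N) X"
  unfolding unitary_mat_def by (simp flip: mmult_assoc)

lemma unitary_cancel2: "unitary_mat N V \<Longrightarrow> mmult N (Defs.adjoint V) (mmult N V X) = mmult N (idm N) X"
  unfolding unitary_mat_def by (simp flip: mmult_assoc)

lemma unitary_mult: assumes "unitary_mat N U" "unitary_mat N V" shows "unitary_mat N (mmult N U V)"
proof -
  have "mmult N (mmult N U V) (Defs.adjoint (mmult N U V)) = idm N"
    using assms unfolding adjoint_mmult
    by (simp add: mmult_assoc unitary_cancel1 idm_absorb_right) (simp add: unitary_mat_def)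
  moreover have "mmult N (Defs.adjoint (mmult N U V)) (mmult N U V) = idm N"
    using assms unfolding adjoint_mmult
    by (simp add: mmult_assoc unitary_cancel2 idm_absorb_right) (simp add: unitary_mat_def)
  ultimately show ?thesis unfolding unitary_mat_def by simp
qed

lemma clifford_mult: assumes "U \<in> clifford n" "V \<in> clifford n" shows "mmult (2^n) U V \<in> clifford n"
proof -
  have "mmult (2^n) (mmult (2^n) (mmult (2^n) U V) P) (Defs.adjoint (mmult (2^n) U V)) \<in> pauli_group n"
    if "P \<in> pauli_group n" for P
  proof -
    have "mmult (2^n) (mmult (2^n) V P) (Defs.adjoint V) \<in> pauli_group n" using assms(2) that
      unfolding clifford_def by blast
    then have "mmult (2^n) (mmult (2^n) U (mmult (2^n) (mmult (2^n) V P) (Defs.adjoint V))) (Defs.adjoint U) \<in> pauli_group n"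
      using assms(1) unfolding clifford_def by blast
    then show ?thesis by (simp add: adjoint_mmult mmult_assoc)
  qed
  then show ?thesis using assms unfolding clifford_def by (auto intro: unitary_mult)
qed

lemma pauli_trunc: "(\<lambda>i j. if i < 2^n \<and> j < 2^n then pauli n c a b i j else 0) = pauli n c a b"
  unfolding pauli_def by (auto simp: fun_eq_iff)

lemma idm_clifford: "idm (2^n) \<in> clifford n"
proof -
  have adj: "Defs.adjoint (idm N) = idm N" for N unfolding Defs.adjoint_def idm_def by (auto simp: fun_eq_iff)
  have u: "unitary_mat (2^n) (idm (2^n))" unfolding unitary_mat_def adj mmult_idm_left
    by (auto simp: idm_def fun_eq_iff)
  have "mmult (2^n) (mmult (2^n) (idm (2^n)) P) (Defs.adjoint (idm (2^n))) = P" if "P \<in> pauli_group n" for P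
    using that unfolding adj mmult_idm_right mmult_trunc_left mmult_idm_left pauli_group_def
    by (auto simp: pauli_trunc)
  then show ?thesis using u unfolding clifford_def by auto
qed

lemma mmult_lin_right: "mmult N A (\<lambda>a b. \<Sum>i\<in>I. c i * B i a b) = (\<lambda>x y. \<Sum>i\<in>I. c i * mmult N A (B i) x y)"
proof -
  have "(\<Sum>k<N. A x k * (\<Sum>i\<in>I. c i * B i k y)) = (\<Sum>i\<in>I. c i * (\<Sum>k<N. A x k * B i k y))" for x y
  proof -
    have "(\<Sum>k<N. A x k * (\<Sum>i\<in>I. c i * B i k y)) = (\<Sum>k<N. \<Sum>i\<in>I. c i * (A x k * B i k y))"
      by (simp add: sum_distrib_left mult_ac)
    also have "\<dots> = (\<Sum>i\<in>I. \<Sum>k<N. c i * (A x k * B i k y))" by (rule sum.swap)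
    also have "\<dots> = (\<Sum>i\<in>I. c i * (\<Sum>k<N. A x k * B i k y))" by (simp add: sum_distrib_left)
    finally show ?thesis .
  qed
  then show ?thesis unfolding mmult_def by (auto simp: fun_eq_iff)
qed

lemma mmult_lin_left: "mmult N (\<lambda>a b. \<Sum>i\<in>I. c i * B i a b) A = (\<lambda>x y. \<Sum>i\<in>I. c i * mmult N (B i) A x y)"
proof -
  have "(\<Sum>k<N. (\<Sum>i\<in>I. c i * B i x k) * A k y) = (\<Sum>i\<in>I. c i * (\<Sum>k<N. B i x k * A k y))" for x y
  proof -
    have "(\<Sum>k<N. (\<Sum>i\<in>I. c i * B i x k) * A k y) = (\<Sum>k<N. \<Sum>i\<in>I. c i * (B i x k * A k y))"
      by (simp add: sum_distrib_right mult.assoc)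
    also have "\<dots> = (\<Sum>i\<in>I. \<Sum>k<N. c i * (B i x k * A k y))" by (rule sum.swap)
    also have "\<dots> = (\<Sum>i\<in>I. c i * (\<Sum>k<N. B i x k * A k y))" by (simp add: sum_distrib_left)
    finally show ?thesis .
  qed
  then show ?thesis unfolding mmult_def by (auto simp: fun_eq_iff)
qed

lemma uc_lin: "unitary_channel N U (\<lambda>a b. \<Sum>i\<in>I. c i * B i a b) = (\<lambda>x y. \<Sum>i\<in>I. c i * unitary_channel N U (B i) x y)"
  unfolding unitary_channel_def mmult_lin_right mmult_lin_left ..

lemma uc_range: assumes "\<And>i j. i < N \<Longrightarrow> j < N \<Longrightarrow> A i j = B i j"
  shows "unitary_channel N U A = unitary_channel N U B"
  unfolding unitary_channel_def using assms by (metis mmult_cong_range)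

definition Sg :: "nat \<Rightarrow> nat \<Rightarrow> cmat" where
  "Sg n e = diagm (2^n) (\<lambda>i. if bit i 0 then \<i> ^ e else 1)"

lemma i_pow_mod4: "\<i> ^ (k mod 4) = \<i> ^ k"
proof -
  have i4: "\<i>^4 = 1"
  proof -
    have "\<i>^4 = (\<i>^2)^2" by (simp flip: power_mult)
    then show ?thesis by simp
  qed
  have "\<i> ^ k = \<i> ^ (4 * (k div 4) + k mod 4)" by (metis div_mult_mod_eq mult.commute)
  also have "\<dots> = (\<i>^4) ^ (k div 4) * \<i> ^ (k mod 4)" by (simp only: power_add power_mult)
  finally show ?thesis using i4 by simp
qed

lemma card_parity:
  assumes "0 < n"
  shows "((-1::complex) ^ card {j. j < n \<and> bit (Bit_Operations.xor b (1::nat)) j \<and> bit y j})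
       = (-1) ^ card {j. j < n \<and> bit b j \<and> bit y j} * (if bit y 0 then -1 else 1)"
proof -
  define A where "A = {j. 0 < j \<and> j < n \<and> bit b j \<and> bit y j}"
  have fA: "finite A" "0 \<notin> A" unfolding A_def by auto
  have S: "{j. j < n \<and> bit b j \<and> bit y j} = A \<union> (if bit b 0 \<and> bit y 0 then {0} else {})"
    using assms unfolding A_def by (auto simp: neq0_conv) (metis gr0I)+
  have S': "{j. j < n \<and> bit (Bit_Operations.xor b (1::nat)) j \<and> bit y j} = A \<union> (if \<not> bit b 0 \<and> bit y 0 then {0} else {})"
    using assms unfolding A_def by (auto simp: bit_simps neq0_conv split: if_splits)
  show ?thesis unfolding S S' using fA by (cases "bit b 0"; cases "bit y 0") auto
qed

lemma xor_lt: "a < 2^n \<Longrightarrow> b < 2^n \<Longrightarrow> Bit_Operations.xor a b < (2::nat)^n"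
  by (metis take_bit_nat_eq_self_iff take_bit_xor)

lemma Sg_clifford:
  assumes n: "0 < n" and e: "cnj (\<i> ^ e) = - (\<i> ^ e)"
  shows "Sg n e \<in> clifford n"
proof -
  have ie: "\<i> ^ e * cnj (\<i> ^ e) = 1"
    by (simp add: complex_cnj_power flip: power_mult_distrib)
  have u: "unitary_mat (2^n) (Sg n e)" unfolding Sg_def
    by (rule unitary_diag) (use ie in auto)
  have "mmult (2^n) (mmult (2^n) (Sg n e) P) (Defs.adjoint (Sg n e)) \<in> pauli_group n"
    if hP: "P \<in> pauli_group n" for P
  proof -
    obtain c a b where P: "P = pauli n c a b" "c < 4" "a < 2^n" "b < 2^n"
      using hP unfolding pauli_group_def by blast
    define c' where "c' = (if bit a 0 then (c + e) mod 4 else c)"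
    define b' where "b' = (if bit a 0 then Bit_Operations.xor b 1 else b)"
    have b'lt: "b' < 2^n"
    proof (cases "bit a 0")
      case True
      have "Bit_Operations.xor b 1 < 2^n"
        using P(4) n by (intro xor_lt) (auto, metis One_nat_def one_less_numeral_iff one_less_power semiring_norm(76))
      then show ?thesis using True unfolding b'_def by simp
    qed (use P in \<open>simp add: b'_def\<close>)
    have eq: "mmult (2^n) (mmult (2^n) (Sg n e) P) (Defs.adjoint (Sg n e)) = pauli n c' a b'"
    proof (rule ext, rule ext)
      fix x y
      show "mmult (2^n) (mmult (2^n) (Sg n e) P) (Defs.adjoint (Sg n e)) x y = pauli n c' a b' x y"
      proof (cases "x < 2^n \<and> y < 2^n \<and> x = Bit_Operations.xor y a")
        case False
        then show ?thesis
          unfolding Sg_def conj_diag P(1) by (auto simp: pauli_def)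
      next
        case True
        have bx: "bit x 0 = (bit y 0 \<noteq> bit a 0)" using True by (simp add: bit_simps)
        have l: "mmult (2^n) (mmult (2^n) (Sg n e) P) (Defs.adjoint (Sg n e)) x y
          = (if bit x 0 then \<i> ^ e else 1) * (\<i> ^ c * (-1) ^ card {j. j < n \<and> bit b j \<and> bit y j})
             * cnj (if bit y 0 then \<i> ^ e else 1)"
          unfolding Sg_def conj_diag P(1) using True by (simp add: pauli_def)
        show ?thesis
        proof (cases "bit a 0")
          case False
          then show ?thesis unfolding l using True bx ie
            by (auto simp: pauli_def c'_def b'_def mult_ac)
        next
          case True2: True
          have r: "pauli n c' a b' x y = \<i> ^ c * \<i> ^ e * ((-1) ^ card {j. j < n \<and> bit b j \<and> bit y j} * (if bit y 0 then -1 else 1))"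
            using True True2 card_parity[OF n, of b y] unfolding pauli_def c'_def b'_def
            by (cases "bit y 0") (simp_all add: i_pow_mod4 power_add)
          show ?thesis unfolding l r using True2 bx e by (cases "bit y 0") (auto simp: mult_ac)
        qed
      qed
    qed
    have "c' < 4" using P(2) by (simp add: c'_def)
    then show ?thesis unfolding eq pauli_group_def using b'lt P by blast
  qed
  then show ?thesis using u unfolding clifford_def by auto
qed

definition IdC :: "nat \<Rightarrow> chan" where "IdC n = unitary_channel (2^n) (idm (2^n))"
definition SC :: "nat \<Rightarrow> chan" where "SC n = unitary_channel (2^n) (Sg n 1)"
definition S3C :: "nat \<Rightarrow> chan" where "S3C n = unitary_channel (2^n) (Sg n 3)"

lemma IdC_STAB: "IdC n \<in> STAB n" unfolding IdC_def STAB_def using idm_clifford by blast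
lemma SC_STAB: "0 < n \<Longrightarrow> SC n \<in> STAB n" unfolding SC_def STAB_def using Sg_clifford[of n 1] by auto
lemma S3C_STAB: "0 < n \<Longrightarrow> S3C n \<in> STAB n" unfolding S3C_def STAB_def using Sg_clifford[of n 3]
  by (auto simp: power3_eq_cube)

lemma omega_eq: "exp (\<i> * complex_of_real (pi / 4)) = Complex (sqrt 2 / 2) (sqrt 2 / 2)"
  by (simp add: complex_eq_iff Re_exp Im_exp cos_45 sin_45)

lemma T_decomp: "Phi_T n \<rho> x y = complex_of_real (sqrt 2 / 2) * IdC n \<rho> x y
    + complex_of_real (1/2) * SC n \<rho> x y + complex_of_real (- (sqrt 2 - 1) / 2) * S3C n \<rho> x y"
proof -
  have T: "T_gate n = diagm (2^n) (\<lambda>i. if bit i 0 then exp (\<i> * complex_of_real (pi / 4)) else 1)"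
    unfolding T_gate_def diagm_def by simp
  have i3: "\<i> ^ 3 = - \<i>" by (simp add: power3_eq_cube)
  show ?thesis
    unfolding Phi_T_def IdC_def SC_def S3C_def T Sg_def idm_diag uc_diag omega_eq i3
    by (cases "bit x 0"; cases "bit y 0") (auto simp: complex_eq_iff field_simps)
qed

lemma part1: assumes n: "1 \<le> n" shows "free_robustness (STAB n) (Phi_T n) \<le> sqrt 2 / 2"
proof -
  define lam where "lam = (sqrt 2 - 1) / 2"
  have s2: "1 < sqrt (2::real)" by simp
  have lam0: "lam \<ge> 0" unfolding lam_def using s2 by simp
  have S3: "S3C n \<in> conv_chans (STAB n)"
    unfolding conv_chans_def
    by (rule CollectI, rule exI[of _ 1], rule exI[of _ "\<lambda>_. 1"], rule exI[of _ "\<lambda>_. S3C n"])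
       (use S3C_STAB n in auto)
  define c where "c = (\<lambda>i::nat. if i = 0 then (sqrt 2 / 2) / (1 + lam) else (1/2) / (1 + lam))"
  define Ps where "Ps = (\<lambda>i::nat. if i = 0 then IdC n else SC n)"
  have mix: "(\<lambda>\<rho> x y. (Phi_T n \<rho> x y + complex_of_real lam * S3C n \<rho> x y) / complex_of_real (1 + lam))
      \<in> conv_chans (STAB n)"
    unfolding conv_chans_def
  proof (rule CollectI, rule exI[of _ 2], rule exI[of _ c], rule exI[of _ Ps], intro conjI)
    show "\<forall>i<2. 0 \<le> c i \<and> Ps i \<in> STAB n" unfolding c_def Ps_def using IdC_STAB SC_STAB n lam0 by auto
    have e1: "1 + lam = (1 + sqrt 2) / 2" unfolding lam_def by (simp add: field_simps)
    show "(\<Sum>i<2. c i) = 1" unfolding c_def using lam0 s2 by (simp add: numeral_2_eq_2 e1 flip: add_divide_distrib) (use s2 in linarith)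
    show "(\<lambda>\<rho> x y. (Phi_T n \<rho> x y + complex_of_real lam * S3C n \<rho> x y) / complex_of_real (1 + lam)) =
       (\<lambda>\<rho> x y. \<Sum>i<2. complex_of_real (c i) * Ps i \<rho> x y)"
    proof (intro ext)
      fix \<rho> x y
      have ne: "complex_of_real (1 + lam) \<noteq> 0" using lam0 by (simp only: of_real_eq_0_iff)
      have "Phi_T n \<rho> x y + complex_of_real lam * S3C n \<rho> x y =
         complex_of_real (sqrt 2 / 2) * IdC n \<rho> x y + complex_of_real (1/2) * SC n \<rho> x y"
        unfolding T_decomp lam_def by (simp add: field_simps)
      then show "(Phi_T n \<rho> x y + complex_of_real lam * S3C n \<rho> x y) / complex_of_real (1 + lam) =
         (\<Sum>i<2. complex_of_real (c i) * Ps i \<rho> x y)"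
        by (simp add: numeral_2_eq_2 c_def Ps_def add_divide_distrib of_real_divide)
    qed
  qed
  have mem: "lam \<in> {lam. lam \<ge> 0 \<and> (\<exists>\<Phi>\<in>conv_chans (STAB n).
      (\<lambda>\<rho> x y. (Phi_T n \<rho> x y + complex_of_real lam * \<Phi> \<rho> x y) / complex_of_real (1 + lam))
        \<in> conv_chans (STAB n))}"
    using lam0 S3 mix by blast
  have "free_robustness (STAB n) (Phi_T n) \<le> lam"
    unfolding free_robustness_def by (rule cInf_lower[OF mem]) (auto intro: bdd_belowI[of _ 0])
  also have "lam \<le> sqrt 2 / 2" unfolding lam_def by simp
  finally show ?thesis .
qed

lemma STAB_comp: assumes "\<Phi> \<in> STAB n" "\<Psi> \<in> STAB n" shows "\<Phi> \<circ> \<Psi> \<in> STAB n"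
proof -
  obtain U V where U: "U \<in> clifford n" "\<Phi> = unitary_channel (2^n) U"
    and V: "V \<in> clifford n" "\<Psi> = unitary_channel (2^n) V" using assms unfolding STAB_def by auto
  have "\<Phi> \<circ> \<Psi> = unitary_channel (2^n) (mmult (2^n) U V)"
    unfolding U V by (auto simp: fun_eq_iff uc_comp)
  then show ?thesis unfolding STAB_def using clifford_mult[OF U(1) V(1)] by auto
qed

lemma STAB_lin: assumes "\<Phi> \<in> STAB n"
  and "\<And>a b. a < 2^n \<Longrightarrow> b < 2^n \<Longrightarrow> A a b = (\<Sum>i\<in>I. c i * B i a b)"
  shows "\<Phi> A = (\<lambda>x y. \<Sum>i\<in>I. c i * \<Phi> (B i) x y)"
proof -
  obtain U where U: "\<Phi> = unitary_channel (2^n) U" using assms unfolding STAB_def by auto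
  have "\<Phi> A = \<Phi> (\<lambda>a b. \<Sum>i\<in>I. c i * B i a b)" unfolding U by (rule uc_range) (use assms in auto)
  then show ?thesis unfolding U uc_lin .
qed

lemma IdC_range: "x < 2^n \<Longrightarrow> y < 2^n \<Longrightarrow> IdC n \<rho> x y = \<rho> x y"
  unfolding IdC_def idm_diag uc_diag by simp

definition coefT :: "nat \<Rightarrow> real" where
  "coefT j = (if j = 0 then sqrt 2 / 2 else if j = 1 then 1/2 else - (sqrt 2 - 1) / 2)"
definition DT :: "nat \<Rightarrow> nat \<Rightarrow> chan" where
  "DT n j = (if j = 0 then IdC n else if j = 1 then SC n else S3C n)"

lemma DT_STAB: "0 < n \<Longrightarrow> DT n j \<in> STAB n"
  unfolding DT_def using IdC_STAB SC_STAB S3C_STAB by auto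

lemma T_decomp3: "Phi_T n \<rho> x y = (\<Sum>j<3. complex_of_real (coefT j) * DT n j \<rho> x y)"
  unfolding T_decomp by (simp add: numeral_3_eq_3 coefT_def DT_def)

lemma sum_coefT: "(\<Sum>j<3. coefT j) = 1"
  by (simp add: numeral_3_eq_3 coefT_def field_simps)

lemma sum_abs_coefT: "(\<Sum>j<3. \<bar>coefT j\<bar>) = sqrt 2"
proof -
  have "1 \<le> sqrt (2::real)" by simp
  then show ?thesis by (simp add: numeral_3_eq_3 coefT_def field_simps abs_if)
qed

definition repr_by :: "nat \<Rightarrow> real \<Rightarrow> chan \<Rightarrow> bool" where
  "repr_by n M \<Psi> \<longleftrightarrow> (\<exists>(I::nat list set) w C. finite I \<and> (\<forall>i\<in>I. C i \<in> STAB n) \<and> sum w I = 1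
     \<and> (\<Sum>i\<in>I. \<bar>w i\<bar>) \<le> M
     \<and> (\<forall>\<rho> x y. x < 2^n \<longrightarrow> y < 2^n \<longrightarrow> \<Psi> \<rho> x y = (\<Sum>i\<in>I. complex_of_real (w i) * C i \<rho> x y)))"

lemma repr_nil: "repr_by n 1 id"
  unfolding repr_by_def
  by (rule exI[of _ "{[]}"], rule exI[of _ "\<lambda>_. 1"], rule exI[of _ "\<lambda>_. IdC n"])
     (auto simp: IdC_STAB IdC_range)

lemma repr_stab: assumes "\<Phi> \<in> STAB n" "repr_by n M \<Psi>" shows "repr_by n M (\<Phi> \<circ> \<Psi>)"
proof -
  obtain I :: "nat list set" and w C where I: "finite I" "\<forall>i\<in>I. C i \<in> STAB n" "sum w I = 1"
     "(\<Sum>i\<in>I. \<bar>w i\<bar>) \<le> M"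
     and eq: "\<And>\<rho> x y. x < 2^n \<Longrightarrow> y < 2^n \<Longrightarrow> \<Psi> \<rho> x y = (\<Sum>i\<in>I. complex_of_real (w i) * C i \<rho> x y)"
    using assms(2) unfolding repr_by_def by blast
  have "(\<Phi> \<circ> \<Psi>) \<rho> x y = (\<Sum>i\<in>I. complex_of_real (w i) * (\<Phi> \<circ> C i) \<rho> x y)" for \<rho> x y
    using STAB_lin[OF assms(1), where A="\<Psi> \<rho>" and I=I and c="\<lambda>i. complex_of_real (w i)" and B="\<lambda>i. C i \<rho>"] eq by simp
  then show ?thesis unfolding repr_by_def using I STAB_comp[OF assms(1)]
    by (intro exI[of _ I] exI[of _ w] exI[of _ "\<lambda>i. \<Phi> \<circ> C i"]) auto
qed

lemma repr_T: assumes n: "0 < n" and "repr_by n M \<Psi>" shows "repr_by n (sqrt 2 * M) (Phi_T n \<circ> \<Psi>)"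
proof -
  obtain I :: "nat list set" and w C where I: "finite I" "\<forall>i\<in>I. C i \<in> STAB n" "sum w I = 1"
     "(\<Sum>i\<in>I. \<bar>w i\<bar>) \<le> M"
     and eq: "\<And>\<rho> x y. x < 2^n \<Longrightarrow> y < 2^n \<Longrightarrow> \<Psi> \<rho> x y = (\<Sum>i\<in>I. complex_of_real (w i) * C i \<rho> x y)"
    using assms(2) unfolding repr_by_def by blast
  define g where "g = (\<lambda>(j::nat, l::nat list). j # l)"
  define I' where "I' = g ` ({..<3} \<times> I)"
  define w' where "w' = (\<lambda>l::nat list. coefT (hd l) * w (tl l))"
  define C' where "C' = (\<lambda>l::nat list. DT n (hd l) \<circ> C (tl l))"
  have inj: "inj_on g ({..<3} \<times> I)" unfolding g_def by (auto simp: inj_on_def)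
  have reidx: "(\<Sum>l\<in>I'. h l) = (\<Sum>j<3. \<Sum>i\<in>I. h (j # i))" for h :: "nat list \<Rightarrow> 'b::comm_monoid_add"
    unfolding I'_def sum.reindex[OF inj] sum.cartesian_product by (rule sum.cong) (auto simp: g_def)
  have fin: "finite I'" unfolding I'_def using I(1) by auto
  have stab: "\<forall>l\<in>I'. C' l \<in> STAB n"
    unfolding I'_def g_def C'_def using I(2) DT_STAB[OF n] STAB_comp by auto
  have s1: "sum w' I' = 1"
    unfolding reidx w'_def by (simp add: sum_distrib_left[symmetric] I(3) sum_coefT)
  have s2: "(\<Sum>l\<in>I'. \<bar>w' l\<bar>) \<le> sqrt 2 * M"
  proof -
    have "(\<Sum>l\<in>I'. \<bar>w' l\<bar>) = (\<Sum>j<3. \<bar>coefT j\<bar> * (\<Sum>i\<in>I. \<bar>w i\<bar>))"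
      unfolding reidx w'_def by (simp add: sum_distrib_left abs_mult)
    also have "\<dots> = sqrt 2 * (\<Sum>i\<in>I. \<bar>w i\<bar>)" by (simp add: sum_distrib_right[symmetric] sum_abs_coefT)
    also have "\<dots> \<le> sqrt 2 * M" using I(4) by (simp add: mult_left_mono)
    finally show ?thesis .
  qed
  have e: "(Phi_T n \<circ> \<Psi>) \<rho> x y = (\<Sum>l\<in>I'. complex_of_real (w' l) * C' l \<rho> x y)"
    for \<rho> x y
  proof -
    have "(Phi_T n \<circ> \<Psi>) \<rho> x y = (\<Sum>j<3. complex_of_real (coefT j) * DT n j (\<Psi> \<rho>) x y)"
      by (simp add: T_decomp3)
    also have "\<dots> = (\<Sum>j<3. complex_of_real (coefT j) * (\<Sum>i\<in>I. complex_of_real (w i) * (DT n j \<circ> C i) \<rho> x y))"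
      using STAB_lin[OF DT_STAB[OF n], where A="\<Psi> \<rho>" and I=I and c="\<lambda>i. complex_of_real (w i)" and B="\<lambda>i. C i \<rho>"] eq by simp
    also have "\<dots> = (\<Sum>l\<in>I'. complex_of_real (w' l) * C' l \<rho> x y)"
      unfolding reidx w'_def C'_def by (simp add: sum_distrib_left mult_ac)
    finally show ?thesis .
  qed
  show ?thesis unfolding repr_by_def
    by (intro exI[of _ I'] exI[of _ w'] exI[of _ C']) (use fin stab s1 s2 e in auto)
qed

lemma repr_mono: assumes "repr_by n M \<Psi>" "M \<le> M'" shows "repr_by n M' \<Psi>"
proof -
  obtain I :: "nat list set" and w C where I: "finite I" "\<forall>i\<in>I. C i \<in> STAB n" "sum w I = 1"
     "(\<Sum>i\<in>I. \<bar>w i\<bar>) \<le> M"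
     and eq: "\<forall>\<rho> x y. x < 2^n \<longrightarrow> y < 2^n \<longrightarrow> \<Psi> \<rho> x y = (\<Sum>i\<in>I. complex_of_real (w i) * C i \<rho> x y)"
    using assms(1) unfolding repr_by_def by blast
  have "(\<Sum>i\<in>I. \<bar>w i\<bar>) \<le> M'" using I(4) assms(2) by linarith
  then show ?thesis unfolding repr_by_def using I eq by blast
qed

lemma repr_list: assumes n: "0 < n" and "set ls \<subseteq> STAB n \<union> {Phi_T n}"
  shows "repr_by n (sqrt 2 ^ length (filter (\<lambda>\<Phi>. \<Phi> = Phi_T n) ls)) (comp_chans ls)"
  using assms(2)
proof (induction ls)
  case Nil
  then show ?case using repr_nil[of n] by (simp add: comp_chans_def id_def)
next
  case (Cons \<Phi> ls)
  have cc: "comp_chans (\<Phi> # ls) = \<Phi> \<circ> comp_chans ls" by (simp add: comp_chans_def)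
  show ?case
  proof (cases "\<Phi> = Phi_T n")
    case True
    have "repr_by n (sqrt 2 * sqrt 2 ^ length (filter (\<lambda>\<Phi>. \<Phi> = Phi_T n) ls)) (Phi_T n \<circ> comp_chans ls)"
      by (intro repr_T[OF n] Cons.IH) (use Cons.prems in auto)
    then show ?thesis unfolding cc using True by (simp add: o_def)
  next
    case False
    have "repr_by n (sqrt 2 ^ length (filter (\<lambda>\<Phi>. \<Phi> = Phi_T n) ls)) (\<Phi> \<circ> comp_chans ls)"
      by (intro repr_stab Cons.IH) (use Cons.prems False in auto)
    then show ?thesis unfolding cc using False by (simp add: o_def)
  qed
qed

lemma f_lin:
  assumes "\<forall>a b. a < 2^n \<longrightarrow> b < 2^n \<longrightarrow> \<Psi> (ket_bra x) a b = (\<Sum>i\<in>I. complex_of_real (w i) * C i (ket_bra x) a b)"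
  shows "f_chan n \<Psi> (x, y) = (\<Sum>i\<in>I. w i * f_chan n (C i) (x, y))"
proof -
  let ?N = "2^n :: nat"
  have "mmult ?N (\<Psi> (ket_bra x)) (ket_bra y) = mmult ?N (\<lambda>a b. \<Sum>i\<in>I. complex_of_real (w i) * C i (ket_bra x) a b) (ket_bra y)"
    by (rule mmult_cong_range) (use assms in auto)
  also have "\<dots> = (\<lambda>p q. \<Sum>i\<in>I. complex_of_real (w i) * mmult ?N (C i (ket_bra x)) (ket_bra y) p q)"
    by (rule mmult_lin_left)
  finally have e: "mmult ?N (\<Psi> (ket_bra x)) (ket_bra y) = (\<lambda>p q. \<Sum>i\<in>I. complex_of_real (w i) * mmult ?N (C i (ket_bra x)) (ket_bra y) p q)" .
  have "mtrace ?N (mmult ?N (\<Psi> (ket_bra x)) (ket_bra y)) = (\<Sum>a<?N. \<Sum>i\<in>I. complex_of_real (w i) * mmult ?N (C i (ket_bra x)) (ket_bra y) a a)"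
    unfolding e mtrace_def ..
  also have "\<dots> = (\<Sum>i\<in>I. \<Sum>a<?N. complex_of_real (w i) * mmult ?N (C i (ket_bra x)) (ket_bra y) a a)"
    by (rule sum.swap)
  also have "\<dots> = (\<Sum>i\<in>I. complex_of_real (w i) * mtrace ?N (mmult ?N (C i (ket_bra x)) (ket_bra y)))"
    unfolding mtrace_def by (simp add: sum_distrib_left)
  finally show ?thesis unfolding f_chan_def by (simp add: Re_sum)
qed

lemma repr_f: assumes "repr_by n M \<Psi>"
  shows "\<exists>(I::nat list set) w h. finite I \<and> (\<forall>i\<in>I. h i \<in> F_class n (STAB n)) \<and> sum w I = 1
     \<and> (\<Sum>i\<in>I. \<bar>w i\<bar>) \<le> M \<and> (\<forall>xy. f_chan n \<Psi> xy = (\<Sum>i\<in>I. w i * h i xy))"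
proof -
  obtain I :: "nat list set" and w C where I: "finite I" "\<forall>i\<in>I. C i \<in> STAB n" "sum w I = 1"
     "(\<Sum>i\<in>I. \<bar>w i\<bar>) \<le> M"
     and eq: "\<forall>\<rho> x y. x < 2^n \<longrightarrow> y < 2^n \<longrightarrow> \<Psi> \<rho> x y = (\<Sum>i\<in>I. complex_of_real (w i) * C i \<rho> x y)"
    using assms(1) unfolding repr_by_def by blast
  have "\<forall>xy. f_chan n \<Psi> xy = (\<Sum>i\<in>I. w i * f_chan n (C i) xy)"
  proof
    fix xy :: "nat \<times> nat"
    obtain x y where xy: "xy = (x, y)" by fastforce
    show "f_chan n \<Psi> xy = (\<Sum>i\<in>I. w i * f_chan n (C i) xy)" unfolding xy
      by (rule f_lin) (use eq in auto)
  qed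
  then show ?thesis using I unfolding F_class_def
    by (intro exI[of _ I] exI[of _ w] exI[of _ "\<lambda>i. f_chan n (C i)"]) auto
qed

definition sv :: "nat \<Rightarrow> (nat \<Rightarrow> nat \<times> nat) \<Rightarrow> (nat \<Rightarrow> real) \<Rightarrow> (nat \<times> nat \<Rightarrow> real) \<Rightarrow> real" where
  "sv m z \<epsilon> g = (\<Sum>i<m. \<epsilon> i * g (z i)) / real m"

lemma rademacher_sv: "rademacher m z G = (\<Sum>\<epsilon>\<in>PiE {..<m} (\<lambda>_. {-1, 1::real}). (SUP g\<in>G. sv m z \<epsilon> g)) / 2 ^ m"
  unfolding rademacher_def sv_def ..

lemma rad_generic:
  fixes G0 G :: "(nat \<times> nat \<Rightarrow> real) set" and M :: real
  assumes G0ne: "G0 \<noteq> {}" and bdd: "\<And>\<epsilon>. bdd_above ((\<lambda>g. sv m z \<epsilon> g) ` G0)"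
    and Gne: "G \<noteq> {}" and M1: "1 \<le> M"
    and rep: "\<And>g. g \<in> G \<Longrightarrow> \<exists>(I::'i set) w h. finite I \<and> (\<forall>i\<in>I. h i \<in> G0) \<and> sum w I = 1
       \<and> (\<Sum>i\<in>I. \<bar>w i\<bar>) \<le> M \<and> (\<forall>xy. g xy = (\<Sum>i\<in>I. w i * h i xy))"
  shows "rademacher m z G \<le> M * rademacher m z G0 \<and> 0 \<le> rademacher m z G0"
proof -
  define E where "E = PiE {..<m} (\<lambda>_. {-1, 1::real})"
  define s where "s = (\<lambda>\<epsilon>. SUP g\<in>G0. sv m z \<epsilon> g)"
  define ng where "ng = (\<lambda>\<epsilon>::nat \<Rightarrow> real. \<lambda>i. - \<epsilon> i)"
  have up: "sv m z \<epsilon> g \<le> s \<epsilon>" if "g \<in> G0" for \<epsilon> g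
    unfolding s_def by (rule cSUP_upper[OF that bdd])
  have svneg: "sv m z (ng \<epsilon>) g = - sv m z \<epsilon> g" for \<epsilon> g
    unfolding sv_def ng_def by (simp add: sum_negf)
  obtain g0 where g0: "g0 \<in> G0" using G0ne by auto
  have spos: "0 \<le> s \<epsilon> + s (ng \<epsilon>)" for \<epsilon>
    using up[OF g0, of \<epsilon>] up[OF g0, of "ng \<epsilon>"] svneg[of \<epsilon> g0] by linarith
  define hb where "hb = (\<lambda>\<epsilon>. s \<epsilon> + (M - 1) / 2 * (s \<epsilon> + s (ng \<epsilon>)))"
  have gb: "sv m z \<epsilon> g \<le> hb \<epsilon>" if gG: "g \<in> G" for \<epsilon> g
  proof -
    obtain I :: "'i set" and w h where I: "finite I" "\<forall>i\<in>I. h i \<in> G0" "sum w I = 1"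
      "(\<Sum>i\<in>I. \<bar>w i\<bar>) \<le> M" and geq: "\<forall>xy. g xy = (\<Sum>i\<in>I. w i * h i xy)"
      using rep[OF gG] by blast
    have "sv m z \<epsilon> g = (\<Sum>i\<in>I. w i * sv m z \<epsilon> (h i))"
    proof -
      have "sv m z \<epsilon> g = (\<Sum>k<m. \<Sum>i\<in>I. \<epsilon> k * (w i * h i (z k))) / real m"
        unfolding sv_def by (simp add: geq sum_distrib_left)
      also have "\<dots> = (\<Sum>i\<in>I. \<Sum>k<m. \<epsilon> k * (w i * h i (z k))) / real m"
        by (subst sum.swap) simp
      also have "\<dots> = (\<Sum>i\<in>I. w i * sv m z \<epsilon> (h i))"
        unfolding sv_def by (simp add: sum_distrib_left sum_divide_distrib mult_ac)
      finally show ?thesis .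
    qed
    also have "\<dots> \<le> (\<Sum>i\<in>I. ((\<bar>w i\<bar> + w i) / 2) * s \<epsilon> + ((\<bar>w i\<bar> - w i) / 2) * s (ng \<epsilon>))"
    proof (rule sum_mono)
      fix i assume i: "i \<in> I"
      have a: "sv m z \<epsilon> (h i) \<le> s \<epsilon>" using up I(2) i by auto
      have b: "- sv m z \<epsilon> (h i) \<le> s (ng \<epsilon>)" using up[of "h i" "ng \<epsilon>"] I(2) i svneg by auto
      show "w i * sv m z \<epsilon> (h i) \<le> ((\<bar>w i\<bar> + w i) / 2) * s \<epsilon> + ((\<bar>w i\<bar> - w i) / 2) * s (ng \<epsilon>)"
      proof (cases "w i \<ge> 0")
        case True
        then show ?thesis using mult_left_mono[OF a True] by simp
      next
        case False
        then have "w i * sv m z \<epsilon> (h i) = (- w i) * (- sv m z \<epsilon> (h i))" by simp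
        also have "\<dots> \<le> (- w i) * s (ng \<epsilon>)" using False b by (intro mult_left_mono) auto
        finally show ?thesis using False by simp
      qed
    qed
    also have "\<dots> = ((\<Sum>i\<in>I. \<bar>w i\<bar>) + 1) / 2 * s \<epsilon> + ((\<Sum>i\<in>I. \<bar>w i\<bar>) - 1) / 2 * s (ng \<epsilon>)"
      using I(3) by (simp add: sum.distrib sum_divide_distrib[symmetric] sum_distrib_right[symmetric]
          sum_subtractf add_divide_distrib diff_divide_distrib)
    also have "\<dots> = s \<epsilon> + ((\<Sum>i\<in>I. \<bar>w i\<bar>) - 1) / 2 * (s \<epsilon> + s (ng \<epsilon>))"
      by (simp add: field_simps)
    also have "\<dots> \<le> hb \<epsilon>" unfolding hb_def using I(4) spos[of \<epsilon>]
      by (intro add_left_mono mult_right_mono) auto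
    finally show ?thesis .
  qed
  have supG: "(SUP g\<in>G. sv m z \<epsilon> g) \<le> hb \<epsilon>" for \<epsilon>
    using Gne gb by (intro cSUP_least) auto
  define r where "r = (\<lambda>\<epsilon>::nat \<Rightarrow> real. restrict (ng \<epsilon>) {..<m})"
  have sr: "s (r \<epsilon>) = s (ng \<epsilon>)" for \<epsilon>
  proof -
    have "sv m z (r \<epsilon>) g = sv m z (ng \<epsilon>) g" for g
      unfolding sv_def r_def by (intro arg_cong[where f="\<lambda>x. x / real m"] sum.cong) auto
    then show ?thesis unfolding s_def by simp
  qed
  have reidx: "(\<Sum>\<epsilon>\<in>E. s (ng \<epsilon>)) = (\<Sum>\<epsilon>\<in>E. s \<epsilon>)"
  proof -
    have "(\<Sum>\<epsilon>\<in>E. s (ng \<epsilon>)) = (\<Sum>\<epsilon>\<in>E. s (r \<epsilon>))" by (simp add: sr)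
    also have "\<dots> = (\<Sum>\<epsilon>\<in>E. s \<epsilon>)"
      by (rule sum.reindex_bij_witness[where i=r and j=r])
         (auto simp: E_def r_def ng_def PiE_def extensional_def Pi_def fun_eq_iff)
    finally show ?thesis .
  qed
  have "rademacher m z G \<le> (\<Sum>\<epsilon>\<in>E. hb \<epsilon>) / 2 ^ m"
    unfolding rademacher_sv E_def[symmetric]
    by (intro divide_right_mono sum_mono supG) auto
  also have "(\<Sum>\<epsilon>\<in>E. hb \<epsilon>) = M * (\<Sum>\<epsilon>\<in>E. s \<epsilon>)"
  proof -
    have "(\<Sum>\<epsilon>\<in>E. hb \<epsilon>) = (\<Sum>\<epsilon>\<in>E. s \<epsilon>) + (M - 1) / 2 * ((\<Sum>\<epsilon>\<in>E. s \<epsilon>) + (\<Sum>\<epsilon>\<in>E. s (ng \<epsilon>)))"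
    proof -
      have "(\<Sum>\<epsilon>\<in>E. hb \<epsilon>) = (\<Sum>\<epsilon>\<in>E. s \<epsilon>) + (\<Sum>\<epsilon>\<in>E. (M - 1) / 2 * (s \<epsilon> + s (ng \<epsilon>)))"
        unfolding hb_def by (rule sum.distrib)
      also have "(\<Sum>\<epsilon>\<in>E. (M - 1) / 2 * (s \<epsilon> + s (ng \<epsilon>))) = (M - 1) / 2 * ((\<Sum>\<epsilon>\<in>E. s \<epsilon>) + (\<Sum>\<epsilon>\<in>E. s (ng \<epsilon>)))"
        by (simp only: sum_distrib_left[symmetric] sum.distrib)
      finally show ?thesis .
    qed
    then show ?thesis unfolding reidx by (simp add: field_simps)
  qed
  also have "\<dots> / 2 ^ m = M * rademacher m z G0"
    unfolding rademacher_sv E_def[symmetric] s_def by simp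
  finally have 1: "rademacher m z G \<le> M * rademacher m z G0" .
  have "0 \<le> (\<Sum>\<epsilon>\<in>E. s \<epsilon> + s (ng \<epsilon>))" using spos by (intro sum_nonneg) auto
  then have "0 \<le> (\<Sum>\<epsilon>\<in>E. s \<epsilon>)" unfolding sum.distrib reidx by simp
  then have "0 \<le> rademacher m z G0" unfolding rademacher_sv E_def[symmetric] s_def by simp
  with 1 show ?thesis by simp
qed

lemma cosh_le: "exp (a::real) + exp (- a) \<le> 2 * exp (a^2 / 2)"
proof -
  define h where "h = 2 * \<bar>a\<bar>"
  have h0: "h \<ge> 0" unfolding h_def by simp
  have H: "- h * (1/2) + ln (1 + (1/2) * (exp h - 1)) \<le> h\<^sup>2 / 8"
    using Hoeffdings_lemma_aux[OF h0, of "1/2"] by simp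
  have h2: "h\<^sup>2 / 8 = a^2 / 2" unfolding h_def by (simp add: power2_eq_square)
  have pe: "1 + (1/2) * (exp h - 1) = (1 + exp h) / 2" by (simp add: field_simps)
  have "0 < (1 + exp h) / (2::real)" by (metis add_pos_pos exp_gt_zero zero_less_divide_iff zero_less_numeral zero_less_one)
  then have pos: "0 < 1 + (1/2) * (exp h - 1)" unfolding pe .
  have "ln (1 + (1/2) * (exp h - 1)) \<le> h / 2 + a^2 / 2" using H h2 by simp
  then have "1 + (1/2) * (exp h - 1) \<le> exp (h / 2 + a^2 / 2)"
    using pos by (metis exp_le_cancel_iff exp_ln)
  then have "exp (- (h/2)) * (1 + (1/2) * (exp h - 1)) \<le> exp (- (h/2)) * exp (h / 2 + a^2 / 2)"
    by (intro mult_left_mono) auto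
  also have "\<dots> = exp (a^2 / 2)" by (simp flip: exp_add)
  also have "exp (- (h/2)) * (1 + (1/2) * (exp h - 1)) = (exp (- (h/2)) + exp (h/2)) / 2"
  proof -
    have "exp (- (h/2)) * exp h = exp (h/2)" by (simp flip: exp_add)
    then show ?thesis by (simp add: field_simps)
  qed
  finally have "(exp (- (h/2)) + exp (h/2)) / 2 \<le> exp (a^2 / 2)" .
  moreover have "exp (- (h/2)) + exp (h/2) = exp a + exp (- a)"
    unfolding h_def by (cases "a \<ge> 0") auto
  ultimately show ?thesis by simp
qed

lemma card_E: "card (PiE {..<m} (\<lambda>_. {-1, 1::real})) = 2 ^ m"
  by (simp add: card_PiE numeral_2_eq_2)

lemma massart:
  fixes V :: "(nat \<Rightarrow> real) set" and B L :: real
  assumes fin: "finite V" and ne: "V \<noteq> {}" and m: "0 < m"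
    and bnd: "\<forall>v\<in>V. \<forall>i<m. \<bar>v i\<bar> \<le> B" and B0: "0 \<le> B"
    and lnV: "ln (real (card V)) \<le> L" and L0: "0 < L"
  shows "(\<Sum>\<epsilon>\<in>PiE {..<m} (\<lambda>_. {-1, 1::real}). Max ((\<lambda>v. \<Sum>i<m. \<epsilon> i * v i) ` V))
      \<le> 2 ^ m * (B * sqrt (2 * real m * L))"
proof -
  define E where "E = PiE {..<m} (\<lambda>_. {-1, 1::real})"
  define X where "X = (\<lambda>(\<epsilon>::nat \<Rightarrow> real) (v::nat \<Rightarrow> real). \<Sum>i<m. \<epsilon> i * v i)"
  define Mx where "Mx = (\<lambda>\<epsilon>. Max ((\<lambda>v. X \<epsilon> v) ` V))"
  have finE: "finite E" unfolding E_def by (intro finite_PiE) auto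
  have cardE: "card E = 2 ^ m" unfolding E_def by (rule card_E)
  have Ene: "E \<noteq> {}" using cardE by auto
  have Mx_in: "\<exists>v\<in>V. Mx \<epsilon> = X \<epsilon> v" for \<epsilon>
  proof -
    have "Mx \<epsilon> \<in> (\<lambda>v. X \<epsilon> v) ` V" unfolding Mx_def using fin ne by (intro Max_in) auto
    then show ?thesis by auto
  qed
  have goal: "(\<Sum>\<epsilon>\<in>E. Mx \<epsilon>) \<le> 2 ^ m * (B * sqrt (2 * real m * L))"
  proof (cases "B = 0")
    case True
    have "X \<epsilon> v = 0" if "v \<in> V" for \<epsilon> v
      using bnd that True unfolding X_def by (intro sum.neutral) auto
    then have "Mx \<epsilon> = 0" for \<epsilon> using Mx_in by metis
    then show ?thesis using True by simp
  next
    case False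
    then have Bp: "0 < B" using B0 by simp
    define t where "t = sqrt (2 * L / real m) / B"
    have tp: "0 < t" unfolding t_def using Bp L0 m by simp
    define avg where "avg = (\<Sum>\<epsilon>\<in>E. Mx \<epsilon>) / 2 ^ m"
    have jensen: "exp (t * avg) \<le> (\<Sum>\<epsilon>\<in>E. exp (t * Mx \<epsilon>)) / 2 ^ m"
    proof -
      have "exp (\<Sum>\<epsilon>\<in>E. (1 / 2 ^ m) *\<^sub>R (t * Mx \<epsilon>)) \<le> (\<Sum>\<epsilon>\<in>E. (1 / 2 ^ m) * exp (t * Mx \<epsilon>))"
        by (rule convex_on_sum[OF finE Ene exp_convex]) (auto simp: cardE)
      moreover have "(\<Sum>\<epsilon>\<in>E. (1 / 2 ^ m) *\<^sub>R (t * Mx \<epsilon>)) = t * avg"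
        unfolding avg_def by (simp add: sum_distrib_left[symmetric] sum_divide_distrib[symmetric] field_simps)
      moreover have "(\<Sum>\<epsilon>\<in>E. (1 / 2 ^ m) * exp (t * Mx \<epsilon>)) = (\<Sum>\<epsilon>\<in>E. exp (t * Mx \<epsilon>)) / 2 ^ m"
        by (simp add: sum_divide_distrib)
      ultimately show ?thesis by simp
    qed
    have step2: "exp (t * Mx \<epsilon>) \<le> (\<Sum>v\<in>V. exp (t * X \<epsilon> v))" for \<epsilon>
    proof -
      obtain v where v: "v \<in> V" "Mx \<epsilon> = X \<epsilon> v" using Mx_in by blast
      show ?thesis unfolding v(2) by (rule member_le_sum[OF v(1)]) (use fin in auto)
    qed
    have step3: "(\<Sum>\<epsilon>\<in>E. exp (t * X \<epsilon> v)) = (\<Prod>i<m. exp (t * v i) + exp (- (t * v i)))" for v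
    proof -
      have "(\<Sum>\<epsilon>\<in>E. exp (t * X \<epsilon> v)) = (\<Sum>\<epsilon>\<in>E. \<Prod>i<m. exp (t * (\<epsilon> i * v i)))"
        unfolding X_def by (simp add: sum_distrib_left exp_sum)
      also have "\<dots> = (\<Prod>i<m. \<Sum>e\<in>{-1, 1::real}. exp (t * (e * v i)))"
        unfolding E_def by (rule prod_sum_PiE[symmetric]) auto
      also have "\<dots> = (\<Prod>i<m. exp (t * v i) + exp (- (t * v i)))"
        by (simp add: add.commute)
      finally show ?thesis .
    qed
    have step4: "(\<Prod>i<m. exp (t * v i) + exp (- (t * v i))) \<le> 2 ^ m * exp (real m * ((t * B)^2 / 2))"
      if v: "v \<in> V" for v
    proof -
      have "(\<Prod>i<m. exp (t * v i) + exp (- (t * v i))) \<le> (\<Prod>i<m. 2 * exp ((t * B)^2 / 2))"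
      proof (rule prod_mono)
        fix i assume i: "i \<in> {..<m}"
        have "\<bar>t * v i\<bar> \<le> t * B" using bnd v i tp by (simp add: abs_mult mult_left_mono)
        then have "(t * v i)^2 \<le> (t * B)^2"
          by (metis abs_le_square_iff abs_of_nonneg mult_nonneg_nonneg tp B0 less_imp_le)
        then have ee: "exp ((t * v i)^2 / 2) \<le> exp ((t * B)^2 / 2)" by simp
        have c: "exp (t * v i) + exp (- (t * v i)) \<le> 2 * exp ((t * B)^2 / 2)"
          using cosh_le[of "t * v i"] ee by linarith
        have "0 \<le> exp (t * v i) + exp (- (t * v i))" by (intro add_nonneg_nonneg) auto
        then show "0 \<le> exp (t * v i) + exp (- (t * v i)) \<and> exp (t * v i) + exp (- (t * v i)) \<le> 2 * exp ((t * B)^2 / 2)"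
          using c by simp
      qed
      also have "\<dots> = 2 ^ m * exp (real m * ((t * B)^2 / 2))"
        by (simp add: power_mult_distrib exp_of_nat_mult[symmetric])
      finally show ?thesis .
    qed
    have "(\<Sum>\<epsilon>\<in>E. exp (t * Mx \<epsilon>)) \<le> (\<Sum>\<epsilon>\<in>E. \<Sum>v\<in>V. exp (t * X \<epsilon> v))"
      by (rule sum_mono) (rule step2)
    also have "\<dots> = (\<Sum>v\<in>V. \<Sum>\<epsilon>\<in>E. exp (t * X \<epsilon> v))" by (rule sum.swap)
    also have "\<dots> \<le> (\<Sum>v\<in>V. 2 ^ m * exp (real m * ((t * B)^2 / 2)))"
      unfolding step3 by (rule sum_mono) (rule step4)
    also have "\<dots> = real (card V) * 2 ^ m * exp (real m * ((t * B)^2 / 2))" by simp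
    finally have s: "(\<Sum>\<epsilon>\<in>E. exp (t * Mx \<epsilon>)) / 2 ^ m \<le> real (card V) * exp (real m * ((t * B)^2 / 2))"
      by (simp add: field_simps)
    have cV: "0 < real (card V)" using fin ne by (simp add: card_gt_0_iff)
    have tB: "(t * B)^2 = 2 * L / real m" unfolding t_def using Bp L0 m by (simp add: power_divide)
    have "exp (t * avg) \<le> exp (ln (real (card V)) + L)"
      using jensen s cV tB m by (simp add: exp_add)
    then have "t * avg \<le> ln (real (card V)) + L" by simp
    then have "t * avg \<le> 2 * L" using lnV by simp
    then have a1: "avg \<le> 2 * L / t" using tp by (simp add: field_simps)
    have "2 * L / t = B * sqrt (2 * real m * L)"
    proof -
      have sq: "sqrt (2 * L / real m) * sqrt (2 * real m * L) = 2 * L"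
      proof -
        have "sqrt (2 * L / real m) * sqrt (2 * real m * L) = sqrt ((2 * L)^2)"
          using m by (simp add: real_sqrt_mult[symmetric] power2_eq_square field_simps)
        moreover have "sqrt ((2 * L)^2) = 2 * L" using L0 by (simp only: real_sqrt_abs)
        ultimately show ?thesis by simp
      qed
      have s1: "sqrt (2 * L / real m) > 0" using L0 m by simp
      have "2 * L / t = B * ((2 * L) / sqrt (2 * L / real m))" unfolding t_def using Bp s1 by (simp add: field_simps)
      also have "(2 * L) / sqrt (2 * L / real m) = (sqrt (2 * L / real m) * sqrt (2 * real m * L)) / sqrt (2 * L / real m)"
        by (simp only: sq)
      also have "\<dots> = sqrt (2 * real m * L)" using s1 by simp
      finally show ?thesis .
    qed
    then have "avg \<le> B * sqrt (2 * real m * L)" using a1 by simp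
    then show ?thesis unfolding avg_def by (simp add: field_simps)
  qed
  then show ?thesis unfolding E_def Mx_def X_def .
qed

definition Zj :: "nat \<Rightarrow> nat \<Rightarrow> cmat" where "Zj n j = pauli n 0 0 (2^j)"
definition Hm :: "nat \<Rightarrow> cmat \<Rightarrow> bool \<Rightarrow> cmat" where
  "Hm N P s = (\<lambda>i l. (1/2) * idm N i l + (if s then -1/2 else 1/2) * P i l)"
fun Qr :: "nat \<Rightarrow> (nat \<Rightarrow> cmat) \<Rightarrow> nat \<Rightarrow> nat \<Rightarrow> cmat" where
  "Qr N Ps x 0 = idm N"
| "Qr N Ps x (Suc j) = mmult N (Hm N (Ps j) (bit x j)) (Qr N Ps x j)"
definition cj :: "nat \<Rightarrow> cmat \<Rightarrow> cmat \<Rightarrow> cmat" where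
  "cj N U A = mmult N (mmult N U A) (Defs.adjoint U)"
definition Fv :: "nat \<Rightarrow> (nat \<Rightarrow> cmat) \<Rightarrow> nat \<times> nat \<Rightarrow> real" where
  "Fv n Ps = (\<lambda>(x, y). Re (mtrace (2^n) (mmult (2^n) (Qr (2^n) Ps x n) (ket_bra y))))"

lemma mmult_lin2_right: "mmult N U (\<lambda>i l. a * A i l + b * B i l) = (\<lambda>i l. a * mmult N U A i l + b * mmult N U B i l)"
  unfolding mmult_def by (auto simp: fun_eq_iff sum.distrib sum_distrib_left algebra_simps)

lemma mmult_lin2_left: "mmult N (\<lambda>i l. a * A i l + b * B i l) U = (\<lambda>i l. a * mmult N A U i l + b * mmult N B U i l)"
  unfolding mmult_def by (auto simp: fun_eq_iff sum.distrib sum_distrib_left algebra_simps)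

lemma cj_lin2: "cj N U (\<lambda>i l. a * A i l + b * B i l) = (\<lambda>i l. a * cj N U A i l + b * cj N U B i l)"
  unfolding cj_def mmult_lin2_right mmult_lin2_left ..

lemma cj_idm: "unitary_mat N U \<Longrightarrow> cj N U (idm N) = idm N"
  unfolding cj_def idm_absorb_left unitary_mat_def by simp

lemma cj_Hm: "unitary_mat N U \<Longrightarrow> cj N U (Hm N P s) = Hm N (cj N U P) s"
  unfolding Hm_def cj_lin2 by (simp add: cj_idm)

lemma cj_mult: "unitary_mat N U \<Longrightarrow> cj N U (mmult N A B) = mmult N (cj N U A) (cj N U B)"
  unfolding cj_def by (simp add: mmult_assoc unitary_cancel2 idm_absorb_right)

lemma cj_Qr: "unitary_mat N U \<Longrightarrow> cj N U (Qr N Ps x k) = Qr N (\<lambda>j. cj N U (Ps j)) x k"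
  by (induction k) (simp_all add: cj_idm cj_mult cj_Hm)

lemma Qr_cong: "(\<And>j. j < k \<Longrightarrow> Ps j = Ps' j) \<Longrightarrow> Qr N Ps x k = Qr N Ps' x k"
  by (induction k) auto

lemma Zj_diag: assumes "j < n" shows "Zj n j = diagm (2^n) (\<lambda>i. if bit i j then -1 else 1)"
proof -
  have c: "card {j'. j' < n \<and> bit ((2::nat)^j) j' \<and> bit l j'} = (if bit l j then 1 else 0)" for l
  proof -
    have "{j'. j' < n \<and> bit ((2::nat)^j) j' \<and> bit l j'} = (if bit l j then {j} else {})"
      using assms by (auto simp: bit_exp_iff)
    then show ?thesis by simp
  qed
  show ?thesis unfolding Zj_def pauli_def diagm_def by (auto simp: fun_eq_iff c)
qed

lemma Hm_diag: "Hm N (diagm N e) s = diagm N (\<lambda>i. 1/2 + (if s then -1/2 else 1/2) * e i)"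
  unfolding Hm_def idm_diag diagm_def by (auto simp: fun_eq_iff)

lemma mmult_diag_diag: "mmult N (diagm N d) (diagm N e) = diagm N (\<lambda>i. d i * e i)"
  unfolding mmult_diag_left by (auto simp: fun_eq_iff diagm_def)

lemma Qr_Z: "k \<le> n \<Longrightarrow> Qr (2^n) (Zj n) x k =
   diagm (2^n) (\<lambda>i. \<Prod>j<k. (if bit x j = bit i j then 1 else 0))"
proof (induction k)
  case 0
  then show ?case by (simp add: idm_diag)
next
  case (Suc k)
  have f: "(1/2 + (if bit x k then -1/2 else 1/2) * (if bit i k then -1 else 1) :: complex)
      = (if bit x k = bit i k then 1 else 0)" for i
    by (cases "bit x k"; cases "bit i k") simp_all
  have k: "k < n" using Suc.prems by simp
  have "Qr (2^n) (Zj n) x (Suc k) = diagm (2^n) (\<lambda>i. (1/2 + (if bit x k then -1/2 else 1/2) * (if bit i k then -1 else 1)) * (\<Prod>j<k. (if bit x j = bit i j then 1 else 0)))"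
    using Suc.IH Suc.prems by (simp only: Qr.simps Zj_diag[OF k] Hm_diag mmult_diag_diag)
  also have "\<dots> = diagm (2^n) (\<lambda>i. \<Prod>j<Suc k. (if bit x j = bit i j then 1 else 0))"
    unfolding f by (simp add: mult.commute)
  finally show ?case .
qed

lemma bit_high: "(x::nat) < 2^n \<Longrightarrow> n \<le> j \<Longrightarrow> \<not> bit x j"
proof -
  assume "x < 2^n" "n \<le> j"
  then have "x < 2^j" by (meson less_le_trans one_le_numeral power_increasing)
  then show ?thesis by (simp add: bit_iff_odd)
qed

lemma bits_eq: "(x::nat) < 2^n \<Longrightarrow> i < 2^n \<Longrightarrow> (\<forall>j<n. bit x j = bit i j) \<longleftrightarrow> x = i"
proof
  assume a: "x < 2^n" "i < 2^n" "\<forall>j<n. bit x j = bit i j"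
  show "x = i"
  proof (rule bit_eqI)
    fix j show "bit x j = bit i j"
      using a bit_high[of x n j] bit_high[of i n j] by (cases "j < n") auto
  qed
qed auto

lemma ketbra_Qr: assumes "x < 2^n" "a < 2^n" "b < 2^n"
  shows "ket_bra x a b = Qr (2^n) (Zj n) x n a b"
proof -
  have p: "(\<Prod>j<n. (if bit x j = bit a j then 1 else 0 :: complex)) = (if x = a then 1 else 0)"
  proof (cases "x = a")
    case True then show ?thesis by simp
  next
    case False
    then obtain j where "j < n" "bit x j \<noteq> bit a j" using bits_eq[OF assms(1,2)] by auto
    then show ?thesis using False by (intro trans[OF prod_zero]) (auto intro!: bexI[of _ j])
  qed
  show ?thesis unfolding Qr_Z[OF order_refl] diagm_def ket_bra_def p using assms by auto
qed

lemma Zj_pauli: assumes "j < n" shows "Zj n j \<in> pauli_group n"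
proof -
  have "(2::nat)^j < 2^n" using assms by (simp add: power_strict_increasing)
  moreover have "(0::nat) < 4" "(0::nat) < 2^n" by auto
  ultimately show ?thesis unfolding Zj_def pauli_group_def by blast
qed

lemma clifford_Fv: assumes U: "U \<in> clifford n"
  shows "\<exists>Ps\<in>PiE {..<n} (\<lambda>_. pauli_group n). \<forall>x y. x < 2^n \<longrightarrow>
     f_chan n (unitary_channel (2^n) U) (x, y) = Fv n Ps (x, y)"
proof -
  have uni: "unitary_mat (2^n) U" using U unfolding clifford_def by auto
  define Ps where "Ps = restrict (\<lambda>j. cj (2^n) U (Zj n j)) {..<n}"
  have PsP: "Ps \<in> PiE {..<n} (\<lambda>_. pauli_group n)"
    unfolding Ps_def using U Zj_pauli unfolding clifford_def cj_def by auto
  have "f_chan n (unitary_channel (2^n) U) (x, y) = Fv n Ps (x, y)" if x: "x < 2^n" for x y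
  proof -
    have "unitary_channel (2^n) U (ket_bra x) = unitary_channel (2^n) U (Qr (2^n) (Zj n) x n)"
      by (rule uc_range) (use ketbra_Qr x in auto)
    also have "\<dots> = Qr (2^n) (\<lambda>j. cj (2^n) U (Zj n j)) x n"
      unfolding unitary_channel_def cj_def[symmetric] cj_Qr[OF uni] ..
    also have "\<dots> = Qr (2^n) Ps x n" by (rule Qr_cong) (simp add: Ps_def)
    finally show ?thesis unfolding f_chan_def Fv_def by simp
  qed
  then show ?thesis using PsP by blast
qed

definition vg :: "nat \<Rightarrow> (nat \<Rightarrow> nat \<times> nat) \<Rightarrow> (nat \<times> nat \<Rightarrow> real) \<Rightarrow> nat \<Rightarrow> real" where
  "vg m z g = (\<lambda>i. if i < m then g (z i) else 0)"

definition Vset :: "nat \<Rightarrow> nat \<Rightarrow> (nat \<Rightarrow> nat \<times> nat) \<Rightarrow> (nat \<Rightarrow> real) set" where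
  "Vset n m z = vg m z ` F_class n (STAB n)"

lemma pauli_group_card: "finite (pauli_group n) \<and> card (pauli_group n) \<le> 4 * 2^n * 2^n"
proof -
  have eq: "pauli_group n = (\<lambda>(c, a, b). pauli n c a b) ` ({..<4} \<times> {..<2^n} \<times> {..<2^n})"
    unfolding pauli_group_def by force
  have "card (pauli_group n) \<le> card ({..<4::nat} \<times> {..<2^n::nat} \<times> {..<2^n::nat})"
    unfolding eq by (rule card_image_le) auto
  then show ?thesis unfolding eq by (simp add: card_cartesian_product)
qed

lemma Vset_sub: assumes "valid_sample n m z"
  shows "Vset n m z \<subseteq> (\<lambda>Ps. vg m z (Fv n Ps)) ` PiE {..<n} (\<lambda>_. pauli_group n)"
proof
  fix v assume "v \<in> Vset n m z"
  then obtain U where U: "U \<in> clifford n" "v = vg m z (f_chan n (unitary_channel (2^n) U))"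
    unfolding Vset_def F_class_def STAB_def by auto
  obtain Ps where Ps: "Ps \<in> PiE {..<n} (\<lambda>_. pauli_group n)"
    "\<forall>x y. x < 2^n \<longrightarrow> f_chan n (unitary_channel (2^n) U) (x, y) = Fv n Ps (x, y)"
    using clifford_Fv[OF U(1)] by blast
  have "v = vg m z (Fv n Ps)"
  proof
    fix i show "v i = vg m z (Fv n Ps) i"
    proof (cases "i < m")
      case True
      obtain x y where xy: "z i = (x, y)" by fastforce
      have "x < 2^n" using assms True xy unfolding valid_sample_def by (metis fst_conv)
      then show ?thesis unfolding U(2) vg_def using True xy Ps(2) by simp
    qed (simp add: U(2) vg_def)
  qed
  then show "v \<in> (\<lambda>Ps. vg m z (Fv n Ps)) ` PiE {..<n} (\<lambda>_. pauli_group n)" using Ps(1) by blast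
qed

lemma Vset_fin: assumes "valid_sample n m z"
  shows "finite (Vset n m z) \<and> card (Vset n m z) \<le> (4 * 2^n * 2^n) ^ n"
proof -
  have fP: "finite (PiE {..<n} (\<lambda>_. pauli_group n))" using pauli_group_card by (intro finite_PiE) auto
  have "card (Vset n m z) \<le> card ((\<lambda>Ps. vg m z (Fv n Ps)) ` PiE {..<n} (\<lambda>_. pauli_group n))"
    by (rule card_mono[OF _ Vset_sub[OF assms]]) (use fP in auto)
  also have "\<dots> \<le> card (PiE {..<n} (\<lambda>_. pauli_group n))" by (rule card_image_le[OF fP])
  also have "\<dots> = card (pauli_group n) ^ n" by (simp add: card_PiE)
  also have "\<dots> \<le> (4 * 2^n * 2^n) ^ n" using pauli_group_card by (intro power_mono) auto
  finally show ?thesis using finite_subset[OF Vset_sub[OF assms]] fP by auto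
qed

lemma Vset_ne: "Vset n m z \<noteq> {}"
  unfolding Vset_def F_class_def using IdC_STAB by auto

lemma sv_vg: "sv m z \<epsilon> g = (\<Sum>i<m. \<epsilon> i * vg m z g i) / real m"
  unfolding sv_def vg_def by simp

lemma bdd_F: assumes "valid_sample n m z"
  shows "bdd_above ((\<lambda>g. sv m z \<epsilon> g) ` F_class n (STAB n))"
proof -
  have "(\<lambda>g. sv m z \<epsilon> g) ` F_class n (STAB n) \<subseteq> (\<lambda>v. (\<Sum>i<m. \<epsilon> i * v i) / real m) ` Vset n m z"
    unfolding Vset_def sv_vg by auto
  moreover have "finite ((\<lambda>v. (\<Sum>i<m. \<epsilon> i * v i) / real m) ` Vset n m z)" using Vset_fin[OF assms] by auto
  ultimately show ?thesis by (meson bdd_above_mono bdd_above_finite)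
qed

lemma F_ne: "F_class n (STAB n) \<noteq> {}" unfolding F_class_def using IdC_STAB by auto

lemma ln_card_bound: assumes "valid_sample n m z" "1 \<le> n"
  shows "ln (real (card (Vset n m z))) \<le> 4 * real n ^ 2"
proof -
  have c0: "0 < card (Vset n m z)" using Vset_fin[OF assms(1)] Vset_ne by (simp add: card_gt_0_iff)
  have a: "(4 * 2^n * 2^n :: nat) = 2 ^ (2 * n + 2)" by (simp add: power_add mult_2)
  have "card (Vset n m z) \<le> (2 ^ (2 * n + 2)) ^ n" using Vset_fin[OF assms(1)] unfolding a by simp
  then have "real (card (Vset n m z)) \<le> real ((2 ^ (2 * n + 2)) ^ n)" by (simp only: of_nat_le_iff)
  also have "\<dots> = 2 ^ ((2 * n + 2) * n)" by (simp only: of_nat_power of_nat_numeral power_mult)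
  finally have cb: "real (card (Vset n m z)) \<le> 2 ^ ((2 * n + 2) * n)" .
  have "ln (real (card (Vset n m z))) \<le> ln (2 ^ ((2 * n + 2) * n))" using c0 cb by simp
  also have "\<dots> = real ((2 * n + 2) * n) * ln 2" by (simp add: ln_realpow)
  also have "\<dots> \<le> real ((2 * n + 2) * n) * 1" using ln_2_less_1 by (intro mult_left_mono) auto
  also have "\<dots> \<le> 4 * real n ^ 2"
  proof -
    have h: "(2 * n + 2) * n \<le> 4 * n ^ 2" using assms(2) by (simp add: power2_eq_square algebra_simps)
    have "real ((2 * n + 2) * n) \<le> real (4 * n ^ 2)" using h by (simp only: of_nat_le_iff)
    then show ?thesis by simp
  qed
  finally show ?thesis .
qed

lemma R0_bound: assumes vs: "valid_sample n m z" and n: "1 \<le> n" and m: "1 \<le> m"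
  shows "rademacher m z (F_class n (STAB n))
     \<le> 3 * (real n / sqrt (real m)) * (SUP \<Phi>\<in>STAB n. sup_norm_vec m z (f_chan n \<Phi>))"
proof -
  define V where "V = Vset n m z"
  define B where "B = (SUP \<Phi>\<in>STAB n. sup_norm_vec m z (f_chan n \<Phi>))"
  define E where "E = PiE {..<m} (\<lambda>_. {-1, 1::real})"
  define Mx where "Mx = (\<lambda>\<epsilon>. Max ((\<lambda>v. \<Sum>i<m. \<epsilon> i * v i) ` V))"
  have finV: "finite V" and Vne: "V \<noteq> {}" using Vset_fin[OF vs] Vset_ne unfolding V_def by auto
  have m0: "0 < m" using m by simp
  have sup1: "(SUP g\<in>F_class n (STAB n). sv m z \<epsilon> g) \<le> Mx \<epsilon> / real m" for \<epsilon>
  proof (rule cSUP_least[OF F_ne])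
    fix g assume g: "g \<in> F_class n (STAB n)"
    have "vg m z g \<in> V" using g unfolding V_def Vset_def by auto
    then have "(\<Sum>i<m. \<epsilon> i * vg m z g i) \<le> Mx \<epsilon>" unfolding Mx_def using finV by (intro Max_ge) auto
    then show "sv m z \<epsilon> g \<le> Mx \<epsilon> / real m" unfolding sv_vg using m0 by (intro divide_right_mono) auto
  qed
  have snv: "sup_norm_vec m z g = Max ((\<lambda>i. \<bar>vg m z g i\<bar>) ` {..<m})" for g
    unfolding sup_norm_vec_def vg_def by (intro arg_cong[where f=Max]) auto
  have bddS: "bdd_above ((\<lambda>\<Phi>. sup_norm_vec m z (f_chan n \<Phi>)) ` STAB n)"
  proof -
    have "(\<lambda>\<Phi>. sup_norm_vec m z (f_chan n \<Phi>)) ` STAB n \<subseteq> (\<lambda>v. Max ((\<lambda>i. \<bar>v i\<bar>) ` {..<m})) ` V"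
      unfolding snv V_def Vset_def F_class_def by auto
    moreover have "bdd_above ((\<lambda>v. Max ((\<lambda>i. \<bar>v i\<bar>) ` {..<m})) ` V)"
      by (rule bdd_above_finite) (use finV in simp)
    ultimately show ?thesis by (rule bdd_above_mono[rotated])
  qed
  have snB: "sup_norm_vec m z (f_chan n \<Phi>) \<le> B" if "\<Phi> \<in> STAB n" for \<Phi>
    unfolding B_def by (rule cSUP_upper[OF that bddS])
  have bnd: "\<forall>v\<in>V. \<forall>i<m. \<bar>v i\<bar> \<le> B"
  proof (intro ballI allI impI)
    fix v i assume v: "v \<in> V" and i: "i < m"
    obtain \<Phi> where \<Phi>: "\<Phi> \<in> STAB n" "v = vg m z (f_chan n \<Phi>)" using v unfolding V_def Vset_def F_class_def by auto
    have "\<bar>v i\<bar> \<le> sup_norm_vec m z (f_chan n \<Phi>)" unfolding snv \<Phi>(2) using i by (intro Max_ge) auto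
    then show "\<bar>v i\<bar> \<le> B" using snB[OF \<Phi>(1)] by linarith
  qed
  have B0: "0 \<le> B"
  proof -
    have "0 \<le> sup_norm_vec m z (f_chan n (IdC n))"
      unfolding snv using m0 by (intro order_trans[OF abs_ge_zero Max_ge]) auto
    then show ?thesis using snB[OF IdC_STAB] by linarith
  qed
  have L0: "0 < 4 * real n ^ 2" using n by simp
  have mass: "(\<Sum>\<epsilon>\<in>E. Mx \<epsilon>) \<le> 2 ^ m * (B * sqrt (2 * real m * (4 * real n ^ 2)))"
    unfolding E_def Mx_def
    by (rule massart[OF finV Vne m0 bnd B0 _ L0]) (use ln_card_bound[OF vs n] V_def in simp)
  have "rademacher m z (F_class n (STAB n)) \<le> (\<Sum>\<epsilon>\<in>E. Mx \<epsilon> / real m) / 2 ^ m"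
    unfolding rademacher_sv E_def[symmetric] by (intro divide_right_mono sum_mono sup1) auto
  also have "\<dots> = (\<Sum>\<epsilon>\<in>E. Mx \<epsilon>) / (real m * 2 ^ m)" by (simp add: sum_divide_distrib)
  also have "\<dots> \<le> 2 ^ m * (B * sqrt (2 * real m * (4 * real n ^ 2))) / (real m * 2 ^ m)"
    using mass m0 by (intro divide_right_mono) auto
  also have "\<dots> = B * sqrt 8 * real n * (sqrt (real m) / real m)"
  proof -
    have e1: "2 * real m * (4 * real n ^ 2) = 8 * real m * real n ^ 2" by simp
    have "sqrt (2 * real m * (4 * real n ^ 2)) = sqrt 8 * sqrt (real m) * sqrt (real n ^ 2)"
      unfolding e1 by (simp only: real_sqrt_mult)
    then have "sqrt (2 * real m * (4 * real n ^ 2)) = sqrt 8 * real n * sqrt (real m)" by simp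
    then show ?thesis by simp
  qed
  also have "sqrt (real m) / real m = 1 / sqrt (real m)"
  proof -
    have sm: "sqrt (real m) > 0" using m0 by simp
    have "real m / sqrt (real m) = sqrt (real m)" by (rule real_div_sqrt) simp
    then show ?thesis using sm by (simp add: field_simps)
  qed
  also have "B * sqrt 8 * real n * (1 / sqrt (real m)) \<le> 3 * (real n / sqrt (real m)) * B"
  proof -
    have "sqrt 8 \<le> (3::real)" by (rule real_le_lsqrt) auto
    then have "B * sqrt 8 * (real n / sqrt (real m)) \<le> B * 3 * (real n / sqrt (real m))"
      using B0 by (intro mult_right_mono mult_left_mono) auto
    then show ?thesis by (simp add: mult_ac)
  qed
  finally show ?thesis unfolding B_def .
qed

lemma comp_single: "comp_chans [\<Phi>] = \<Phi>" by (simp add: comp_chans_def)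

lemma part2: assumes vs: "valid_sample n m z" and n: "1 \<le> n"
  shows "rademacher m z (F_class n (STAB n \<union> {Phi_T n})) \<le> (1 + sqrt 2 / 2) * rademacher m z (F_class n (STAB n))"
proof -
  have n0: "0 < n" using n by simp
  have r: "rademacher m z (F_class n (STAB n \<union> {Phi_T n})) \<le> sqrt 2 * rademacher m z (F_class n (STAB n))
     \<and> 0 \<le> rademacher m z (F_class n (STAB n))"
  proof (rule rad_generic[OF F_ne bdd_F[OF vs]])
    show "F_class n (STAB n \<union> {Phi_T n}) \<noteq> {}" unfolding F_class_def by simp
    show "1 \<le> sqrt (2::real)" by simp
    fix g assume "g \<in> F_class n (STAB n \<union> {Phi_T n})"
    then obtain \<Phi> where \<Phi>: "\<Phi> \<in> STAB n \<union> {Phi_T n}" "g = f_chan n \<Phi>" unfolding F_class_def by auto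
    have "repr_by n (sqrt 2 ^ length (filter (\<lambda>\<Psi>. \<Psi> = Phi_T n) [\<Phi>])) (comp_chans [\<Phi>])"
      by (rule repr_list[OF n0]) (use \<Phi> in auto)
    then have "repr_by n (sqrt 2) \<Phi>" unfolding comp_single
      by (rule repr_mono) (auto)
    then show "\<exists>(I::nat list set) w h. finite I \<and> (\<forall>i\<in>I. h i \<in> F_class n (STAB n)) \<and> sum w I = 1
       \<and> (\<Sum>i\<in>I. \<bar>w i\<bar>) \<le> sqrt 2 \<and> (\<forall>xy. g xy = (\<Sum>i\<in>I. w i * h i xy))"
      unfolding \<Phi>(2) by (rule repr_f)
  qed
  have "sqrt 2 \<le> 1 + sqrt (2::real) / 2"
  proof -
    have "sqrt (2::real) \<le> 2" by (rule real_le_lsqrt) auto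
    then show ?thesis by simp
  qed
  then have "sqrt 2 * rademacher m z (F_class n (STAB n)) \<le> (1 + sqrt 2 / 2) * rademacher m z (F_class n (STAB n))"
    using r by (intro mult_right_mono) auto
  then show ?thesis using r by linarith
qed

lemma part3: assumes vs: "valid_sample n m z" and n: "1 \<le> n"
  shows "rademacher m z (F_class n (STAB_T n k)) \<le> (1 + sqrt 2) ^ k * rademacher m z (F_class n (STAB n))"
proof -
  have n0: "0 < n" using n by simp
  have r: "rademacher m z (F_class n (STAB_T n k)) \<le> sqrt 2 ^ k * rademacher m z (F_class n (STAB n))
     \<and> 0 \<le> rademacher m z (F_class n (STAB n))"
  proof (rule rad_generic[OF F_ne bdd_F[OF vs]])
    have "comp_chans [] \<in> STAB_T n k" unfolding STAB_T_def by auto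
    then show "F_class n (STAB_T n k) \<noteq> {}" unfolding F_class_def by auto
    show "1 \<le> sqrt (2::real) ^ k" by simp
    fix g assume "g \<in> F_class n (STAB_T n k)"
    then obtain ls where ls: "set ls \<subseteq> STAB n \<union> {Phi_T n}" "length (filter (\<lambda>\<Phi>. \<Phi> = Phi_T n) ls) \<le> k"
      "g = f_chan n (comp_chans ls)" unfolding F_class_def STAB_T_def by auto
    have "repr_by n (sqrt 2 ^ length (filter (\<lambda>\<Psi>. \<Psi> = Phi_T n) ls)) (comp_chans ls)"
      by (rule repr_list[OF n0 ls(1)])
    then have "repr_by n (sqrt 2 ^ k) (comp_chans ls)"
      by (rule repr_mono) (use ls(2) in \<open>auto intro: power_increasing\<close>)
    then show "\<exists>(I::nat list set) w h. finite I \<and> (\<forall>i\<in>I. h i \<in> F_class n (STAB n)) \<and> sum w I = 1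
       \<and> (\<Sum>i\<in>I. \<bar>w i\<bar>) \<le> sqrt 2 ^ k \<and> (\<forall>xy. g xy = (\<Sum>i\<in>I. w i * h i xy))"
      unfolding ls(3) by (rule repr_f)
  qed
  have "sqrt 2 ^ k \<le> (1 + sqrt (2::real)) ^ k" by (intro power_mono) auto
  then have "sqrt 2 ^ k * rademacher m z (F_class n (STAB n)) \<le> (1 + sqrt 2) ^ k * rademacher m z (F_class n (STAB n))"
    using r by (intro mult_right_mono) auto
  then show ?thesis using r by linarith
qed

theorem mainTheorem7:
  shows "(\<forall>n\<ge>1. free_robustness (STAB n) (Phi_T n) \<le> sqrt 2 / 2)
    \<and> (\<forall>n m z. n \<ge> 1 \<longrightarrow> m \<ge> 1 \<longrightarrow> valid_sample n m z \<longrightarrow>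
         rademacher m z (F_class n (STAB n \<union> {Phi_T n}))
           \<le> (1 + sqrt 2 / 2) * rademacher m z (F_class n (STAB n)))
    \<and> (\<forall>n m z k. n \<ge> 1 \<longrightarrow> m \<ge> 1 \<longrightarrow> valid_sample n m z \<longrightarrow>
         rademacher m z (F_class n (STAB_T n k))
           \<le> (1 + sqrt 2) ^ k * rademacher m z (F_class n (STAB n)))
    \<and> (\<exists>C::real. \<forall>n m z k. n \<ge> 1 \<longrightarrow> m \<ge> 1 \<longrightarrow> valid_sample n m z \<longrightarrow>
         rademacher m z (F_class n (STAB_T n k))
           \<le> C * (1 + sqrt 2) ^ k * (real n / sqrt (real m))
              * (SUP \<Phi>\<in>STAB n. sup_norm_vec m z (f_chan n \<Phi>)))"
  proof (intro conjI)
  show "\<forall>n\<ge>1. free_robustness (STAB n) (Phi_T n) \<le> sqrt 2 / 2" using part1 by blast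
  show "\<forall>n m z. n \<ge> 1 \<longrightarrow> m \<ge> 1 \<longrightarrow> valid_sample n m z \<longrightarrow>
         rademacher m z (F_class n (STAB n \<union> {Phi_T n}))
           \<le> (1 + sqrt 2 / 2) * rademacher m z (F_class n (STAB n))" using part2 by blast
  show "\<forall>n m z k. n \<ge> 1 \<longrightarrow> m \<ge> 1 \<longrightarrow> valid_sample n m z \<longrightarrow>
         rademacher m z (F_class n (STAB_T n k))
           \<le> (1 + sqrt 2) ^ k * rademacher m z (F_class n (STAB n))" using part3 by blast
  show "\<exists>C::real. \<forall>n m z k. n \<ge> 1 \<longrightarrow> m \<ge> 1 \<longrightarrow> valid_sample n m z \<longrightarrow>
         rademacher m z (F_class n (STAB_T n k))
           \<le> C * (1 + sqrt 2) ^ k * (real n / sqrt (real m))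
              * (SUP \<Phi>\<in>STAB n. sup_norm_vec m z (f_chan n \<Phi>))"
  proof (intro exI[of _ 3] allI impI)
    fix n m :: nat and z :: "nat \<Rightarrow> nat \<times> nat" and k :: nat
    assume n: "n \<ge> 1" and m: "m \<ge> 1" and vs: "valid_sample n m z"
    have "rademacher m z (F_class n (STAB_T n k)) \<le> (1 + sqrt 2) ^ k * rademacher m z (F_class n (STAB n))"
      by (rule part3[OF vs n])
    also have "\<dots> \<le> (1 + sqrt 2) ^ k * (3 * (real n / sqrt (real m)) * (SUP \<Phi>\<in>STAB n. sup_norm_vec m z (f_chan n \<Phi>)))"
      by (intro mult_left_mono R0_bound[OF vs n m]) auto
    finally show "rademacher m z (F_class n (STAB_T n k))
           \<le> 3 * (1 + sqrt 2) ^ k * (real n / sqrt (real m))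
              * (SUP \<Phi>\<in>STAB n. sup_norm_vec m z (f_chan n \<Phi>))" by (simp add: mult_ac)
  qed
qed

end
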